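(* Let $K$ be a number field, let $X\subseteq M_d(K)$ be a closed set in the linear Zariski topology, and let $D,D'\subseteq X$ be arbitrary subsets. If $DD'\subseteq X$, then also $\overline{D}\,\overline{D'}\subseteq X$.
   Context: The linear Zariski topology on $M_d(K)$ has as closed sets exactly the finite unions of vector subspaces; $\overline{D}$ is the closure of $D$ in this topology, and for sets $Y,Z$ of matrices, $YZ=\{yz: y\in Y,z\in Z\}$. *)

theory Defs
  imports "HOL-Analysis.Finite_Cartesian_Product"
begin

definition number_field_type :: "'k::field_char_0 itself \<Rightarrow> bool" where
  "number_field_type _ \<longleftrightarrow>
     (\<exists>B :: 'k set. finite B \<and>
        (\<forall>x :: 'k. \<exists>c :: 'k \<Rightarrow> rat. x = (\<Sum>b\<in>B. of_rat (c b) * b)))"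

definition msmult :: "'k::field \<Rightarrow> 'k^'n^'n \<Rightarrow> 'k^'n^'n" where
  "msmult c A = (\<chi> i j. c * A $ i $ j)"

definition mat_subspace :: "('k::field^'n^'n) set \<Rightarrow> bool" where
  "mat_subspace V \<longleftrightarrow> 0 \<in> V \<and> (\<forall>A\<in>V. \<forall>B\<in>V. A + B \<in> V)
     \<and> (\<forall>c. \<forall>A\<in>V. msmult c A \<in> V)"

definition lz_closed :: "('k::field^'n^'n) set \<Rightarrow> bool" where
  "lz_closed X \<longleftrightarrow> (\<exists>F. finite F \<and> (\<forall>V\<in>F. mat_subspace V) \<and> X = \<Union>F)"

definition lz_closure :: "('k::field^'n^'n) set \<Rightarrow> ('k^'n^'n) set" where
  "lz_closure D = \<Inter>{X. lz_closed X \<and> D \<subseteq> X}"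

definition set_mmult :: "('k::field^'n^'n) set \<Rightarrow> ('k^'n^'n) set \<Rightarrow> ('k^'n^'n) set" where
  "set_mmult Y Z = {y ** z | y z. y \<in> Y \<and> z \<in> Z}"

end

theory Submission
  imports Defs
begin

lemma preimage_closed:
  fixes f :: "'k::field^'n^'n \<Rightarrow> 'k^'n^'n"
  assumes lin: "\<And>A B. f (A + B) = f A + f B" "\<And>c A. f (msmult c A) = msmult c (f A)" "f 0 = 0"
    and X: "lz_closed X"
  shows "lz_closed (f -` X)"
proof -
  obtain F where F: "finite F" "\<forall>V\<in>F. mat_subspace V" "X = \<Union>F"
    using X unfolding lz_closed_def by blast
  have "f -` X = \<Union>((\<lambda>V. f -` V) ` F)" using F(3) by auto
  moreover have "\<forall>W\<in>(\<lambda>V. f -` V) ` F. mat_subspace W"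
    using F(2) lin unfolding mat_subspace_def by auto
  ultimately show ?thesis unfolding lz_closed_def using F(1) by blast
qed

lemma closure_sub: "lz_closed X \<Longrightarrow> D \<subseteq> X \<Longrightarrow> lz_closure D \<subseteq> X"
  unfolding lz_closure_def by blast

lemma lmul_lin:
  fixes d :: "'k::field^'n^'n"
  shows "d ** (A + B) = d ** A + d ** B" "d ** msmult c A = msmult c (d ** A)" "d ** 0 = 0"
    apply (rule matrix_add_ldistrib)
   apply (simp add: msmult_def matrix_matrix_mult_def vec_eq_iff sum_distrib_left mult.left_commute)
  apply simp
  done

lemma rmul_lin:
  fixes e :: "'k::field^'n^'n"
  shows "(A + B) ** e = A ** e + B ** e" "msmult c A ** e = msmult c (A ** e)" "0 ** e = 0"
    apply (simp add: matrix_matrix_mult_def vec_eq_iff sum.distrib distrib_right)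
   apply (simp add: msmult_def matrix_matrix_mult_def vec_eq_iff sum_distrib_left mult.assoc)
  apply simp
  done

theorem mainTheorem8:
  fixes X D D' :: "('k::field_char_0 ^ 'n ^ 'n) set"
  assumes "number_field_type TYPE('k)"
    and "lz_closed X"
    and "D \<subseteq> X" and "D' \<subseteq> X"
    and "set_mmult D D' \<subseteq> X"
  shows "set_mmult (lz_closure D) (lz_closure D') \<subseteq> X"
proof -
  have step1: "d ** e \<in> X" if "d \<in> D" "e \<in> lz_closure D'" for d e
  proof -
    have "D' \<subseteq> (\<lambda>y. d ** y) -` X" using assms(5) that(1) unfolding set_mmult_def by blast
    moreover have "lz_closed ((\<lambda>y. d ** y) -` X)"
      by (rule preimage_closed) (simp_all add: lmul_lin assms(2))
    ultimately show ?thesis using closure_sub that(2) by blast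
  qed
  have "d ** e \<in> X" if "d \<in> lz_closure D" "e \<in> lz_closure D'" for d e
  proof -
    have "D \<subseteq> (\<lambda>y. y ** e) -` X" using step1 that(2) by blast
    moreover have "lz_closed ((\<lambda>y. y ** e) -` X)"
      by (rule preimage_closed) (simp_all add: rmul_lin assms(2))
    ultimately show ?thesis using closure_sub that(1) by blast
  qed
  then show ?thesis unfolding set_mmult_def by blast
qed

end
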